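(* Let $p\in(0,1)$. For $n\ge1$, let $X_n$ be the maximum weight of a directed path from $1$ to $n$ in the transitive tournament on $\{1,\ldots,n\}$ with independent $\mathrm{Bernoulli}(p)$ edge weights. Let $f(n)=\mathbb{E}[X_n]$ for $n\ge1$, and $f(0)=0$ (so $f(0)=f(1)=0$). Then for every $n\ge1$, \[ f(n)=\sum_{i=2}^{n}\big(1-(1-p)^{i-1}\big)(1-p)^{\binom{i-1}{2}}\big(f(n-i+1)+1\big). \]
   Context: The transitive tournament on $\{1,\ldots,n\}$ has a directed edge $(i,j)$ for every $1\le i<j\le n$. Each edge independently has weight $1$ with probability $p$ and weight $0$ otherwise. The weight of a path is the sum of its edge weights. $\binom{0}{2}=\binom{1}{2}=0$. *)

theory Defs
  imports "HOL-Probability.Probability"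
begin

definition tt_edges :: "nat \<Rightarrow> (nat \<times> nat) set" where
  "tt_edges n = {(i, j). 1 \<le> i \<and> i < j \<and> j \<le> n}"

text \<open>Random edge weights: independent Bernoulli(p) for every edge (True = weight 1);
  off the edge set the value is fixed to False.\<close>
definition weight_pmf :: "real \<Rightarrow> nat \<Rightarrow> (nat \<times> nat \<Rightarrow> bool) pmf" where
  "weight_pmf p n = Pi_pmf (tt_edges n) False (\<lambda>_. bernoulli_pmf p)"

definition tt_paths :: "nat \<Rightarrow> nat list set" where
  "tt_paths n = {xs. xs \<noteq> [] \<and> hd xs = 1 \<and> last xs = n \<and> sorted_wrt (<) xs \<and> set xs \<subseteq> {1..n}}"

definition path_weight :: "(nat \<times> nat \<Rightarrow> bool) \<Rightarrow> nat list \<Rightarrow> nat" where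
  "path_weight w xs = sum_list (map (\<lambda>e. if w e then 1 else 0) (zip xs (tl xs)))"

definition max_path_weight :: "(nat \<times> nat \<Rightarrow> bool) \<Rightarrow> nat \<Rightarrow> nat" where
  "max_path_weight w n = Max (path_weight w ` tt_paths n)"

definition f_exp :: "real \<Rightarrow> nat \<Rightarrow> real" where
  "f_exp p n = (if n = 0 then 0
     else measure_pmf.expectation (weight_pmf p n) (\<lambda>w. real (max_path_weight w n)))"

end

theory Submission
  imports Defs
begin


lemma pw_Nil[simp]: "path_weight w [] = 0"
  by (simp add: path_weight_def)
lemma pw_single[simp]: "path_weight w [x] = 0"
  by (simp add: path_weight_def)
lemma pw_Cons2[simp]: "path_weight w (x # y # zs) = (if w (x,y) then 1 else 0) + path_weight w (y # zs)"
  by (simp add: path_weight_def)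

lemma pw_append:
  assumes "xs \<noteq> []" "ys \<noteq> []"
  shows "path_weight w (xs @ ys) = path_weight w xs + (if w (last xs, hd ys) then 1 else 0) + path_weight w ys"
  using assms
proof (induction xs)
  case (Cons x xs)
  then show ?case
  proof (cases xs)
    case Nil
    then show ?thesis using Cons.prems by (cases ys) auto
  next
    case (Cons y zs)
    then show ?thesis using Cons.IH Cons.prems by auto
  qed
qed simp

lemma pw_cong:
  assumes "\<And>e. e \<in> set (zip xs (tl xs)) \<Longrightarrow> w e = w' e"
  shows "path_weight w xs = path_weight w' xs"
proof -
  have "map (\<lambda>e. if w e then 1 else 0) (zip xs (tl xs)) = map (\<lambda>e. if w' e then 1 else (0::nat)) (zip xs (tl xs))"
    using assms by (intro map_cong) auto
  then show ?thesis unfolding path_weight_def by (rule arg_cong[where f=sum_list])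
qed

lemma pw_zero:
  assumes "\<And>e. e \<in> set (zip xs (tl xs)) \<Longrightarrow> \<not> w e"
  shows "path_weight w xs = 0"
  unfolding path_weight_def using assms by (auto simp: sum_list_eq_0_iff)

lemma edges_sorted:
  assumes "sorted_wrt (<) xs" "(u,v) \<in> set (zip xs (tl xs))"
  shows "u < v \<and> u \<in> set xs \<and> v \<in> set xs"
  using assms
proof (induction xs)
  case (Cons x xs)
  then show ?case
  proof (cases xs)
    case Nil
    then show ?thesis using Cons.prems by auto
  next
    case (Cons y zs)
    then show ?thesis using Cons.IH Cons.prems by auto
  qed
qed simp

lemma pw_shift:
  "path_weight w (map (\<lambda>v. v + c) xs) = path_weight (\<lambda>(u,v). w (u + c, v + c)) xs"
  by (induction xs rule: induct_list012) auto

definition paths :: "nat \<Rightarrow> nat \<Rightarrow> nat list set" where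
  "paths a n = {xs. xs \<noteq> [] \<and> hd xs = a \<and> last xs = n \<and> sorted_wrt (<) xs \<and> set xs \<subseteq> {a..n}}"

definition mpw :: "(nat \<times> nat \<Rightarrow> bool) \<Rightarrow> nat \<Rightarrow> nat \<Rightarrow> nat" where
  "mpw w a n = Max (path_weight w ` paths a n)"

lemma tt_paths_eq: "tt_paths n = paths 1 n"
  by (simp add: tt_paths_def paths_def)

lemma finite_paths: "finite (paths a n)"
proof -
  have "paths a n \<subseteq> {xs. set xs \<subseteq> {a..n} \<and> length xs \<le> card {a..n}}"
  proof
    fix xs assume "xs \<in> paths a n"
    then have "set xs \<subseteq> {a..n}" "distinct xs" by (auto simp: paths_def strict_sorted_iff)
    then show "xs \<in> {xs. set xs \<subseteq> {a..n} \<and> length xs \<le> card {a..n}}"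
      by (metis card_mono distinct_card finite_atLeastAtMost mem_Collect_eq)
  qed
  then show ?thesis using finite_lists_length_le[of "{a..n}"] finite_subset by blast
qed

lemma paths_nonempty: "a \<le> n \<Longrightarrow> paths a n \<noteq> {}"
proof -
  assume "a \<le> n"
  then have "(if a = n then [a] else [a, n]) \<in> paths a n" by (auto simp: paths_def)
  then show ?thesis by blast
qed

lemma paths_shift:
  "paths (a + c) (n + c) = map (\<lambda>v. v + c) ` paths a n"
proof
  show "map (\<lambda>v. v + c) ` paths a n \<subseteq> paths (a + c) (n + c)"
    by (auto simp: paths_def hd_map last_map sorted_wrt_map subset_iff)
next
  show "paths (a + c) (n + c) \<subseteq> map (\<lambda>v. v + c) ` paths a n"
  proof
    fix xs assume xs: "xs \<in> paths (a + c) (n + c)"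
    then have ge: "\<forall>v\<in>set xs. v \<ge> c" by (auto simp: paths_def)
    have eq: "xs = map (\<lambda>v. v + c) (map (\<lambda>v. v - c) xs)"
      using ge by (induction xs) auto
    have "sorted_wrt (<) (map (\<lambda>v. v - c) xs)"
      unfolding sorted_wrt_map
    proof (rule sorted_wrt_mono_rel[of xs "(<)"])
      show "sorted_wrt (<) xs" using xs by (simp add: paths_def)
      fix x y assume "x \<in> set xs" "y \<in> set xs" "x < y"
      then show "x - c < y - c" using ge by fastforce
    qed
    moreover have "hd xs \<ge> c" "last xs \<ge> c" using xs ge by (auto simp: paths_def)
    ultimately have "map (\<lambda>v. v - c) xs \<in> paths a n"
      using xs by (fastforce simp: paths_def hd_map last_map subset_iff)
    then show "xs \<in> map (\<lambda>v. v + c) ` paths a n" using eq by blast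
  qed
qed

lemma mpw_shift:
  "mpw w (a + c) (n + c) = mpw (\<lambda>(u,v). w (u + c, v + c)) a n"
  unfolding mpw_def paths_shift image_image pw_shift ..



definition zeroE :: "(nat \<times> nat \<Rightarrow> bool) \<Rightarrow> nat \<Rightarrow> bool" where
  "zeroE w k = (\<forall>x\<in>tt_edges k. \<not> w x)"

definition Tev :: "(nat \<times> nat \<Rightarrow> bool) \<Rightarrow> nat \<Rightarrow> bool" where
  "Tev w i = (zeroE w (i - 1) \<and> \<not> zeroE w i)"

lemma tt_edges_mono: "k \<le> l \<Longrightarrow> tt_edges k \<subseteq> tt_edges l"
  by (auto simp: tt_edges_def)

lemma finite_tt_edges: "finite (tt_edges n)"
  by (rule finite_subset[of _ "{1..n} \<times> {1..n}"]) (auto simp: tt_edges_def)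

lemma path_edges:
  assumes "xs \<in> paths a n" "(u,v) \<in> set (zip xs (tl xs))"
  shows "u < v \<and> a \<le> u \<and> v \<le> n"
  using edges_sorted[of xs u v] assms by (auto simp: paths_def subset_iff)

lemma Tev_unique: "Tev w i \<Longrightarrow> Tev w j \<Longrightarrow> i = j"
proof (rule ccontr)
  assume a: "Tev w i" "Tev w j" "i \<noteq> j"
  have *: False if "Tev w a" "Tev w b" "a < b" for a b
  proof -
    from that obtain x where "x \<in> tt_edges a" "w x" by (auto simp: Tev_def zeroE_def)
    moreover have "tt_edges a \<subseteq> tt_edges (b - 1)" using that by (intro tt_edges_mono) auto
    ultimately show False using that by (auto simp: Tev_def zeroE_def)
  qed
  show False using a *[of i j] *[of j i] by linarith
qed

lemma Tev_exists:
  assumes "\<not> zeroE w n"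
  shows "\<exists>i\<in>{2..n}. Tev w i"
proof -
  define P where "P = (\<lambda>b. \<exists>a. (a, b) \<in> tt_edges n \<and> w (a, b))"
  from assms obtain a b where ab: "(a,b) \<in> tt_edges n" "w (a,b)" by (auto simp: zeroE_def)
  then have "P b" by (auto simp: P_def)
  define b0 where "b0 = (LEAST b. P b)"
  have Pb0: "P b0" unfolding b0_def using \<open>P b\<close> by (rule LeastI)
  then obtain a0 where a0: "(a0, b0) \<in> tt_edges n" "w (a0, b0)" by (auto simp: P_def)
  have "zeroE w (b0 - 1)"
    unfolding zeroE_def
  proof
    fix x assume x: "x \<in> tt_edges (b0 - 1)"
    obtain u v where uv: "x = (u,v)" by fastforce
    have "v < b0" "(u,v) \<in> tt_edges n" using x uv a0(1) by (auto simp: tt_edges_def)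
    then show "\<not> w x" using not_less_Least[of v P] uv unfolding b0_def P_def by blast
  qed
  moreover have "\<not> zeroE w b0" using a0 by (auto simp: zeroE_def tt_edges_def)
  moreover have "b0 \<in> {2..n}" using a0(1) by (auto simp: tt_edges_def)
  ultimately show ?thesis by (auto simp: Tev_def)
qed

lemma mpw_ge:
  assumes "xs \<in> paths a n"
  shows "path_weight w xs \<le> mpw w a n"
  unfolding mpw_def using assms finite_paths by (intro Max_ge) auto

lemma mpw_obtain:
  assumes "a \<le> n"
  obtains xs where "xs \<in> paths a n" "path_weight w xs = mpw w a n"
proof -
  have "mpw w a n \<in> path_weight w ` paths a n"
    unfolding mpw_def using finite_paths paths_nonempty[OF assms] by (intro Max_in) auto
  then obtain xs where "xs \<in> paths a n" "mpw w a n = path_weight w xs" by blast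
  then show ?thesis using that by simp
qed

lemma mpw_upper:
  assumes "\<And>xs. xs \<in> paths a n \<Longrightarrow> path_weight w xs \<le> B" "a \<le> n"
  shows "mpw w a n \<le> B"
  using mpw_obtain[OF assms(2), of w] assms(1) by metis

lemma sorted_Cons_gt: "sorted_wrt (<) (z # zs) \<Longrightarrow> v \<in> set zs \<Longrightarrow> z < v"
  by auto

lemma T_value:
  assumes T: "Tev w i" and i: "2 \<le> i" "i \<le> n"
  shows "max_path_weight w n = 1 + mpw w i n"
proof -
  have z: "\<not> w (u,v)" if "1 \<le> u" "u < v" "v < i" for u v
    using T that unfolding Tev_def zeroE_def tt_edges_def by auto
  obtain k where k: "1 \<le> k" "k < i" "w (k, i)"
  proof -
    from T obtain x where x: "x \<in> tt_edges i" "w x" by (auto simp: Tev_def zeroE_def)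
    obtain u v where uv: "x = (u,v)" by fastforce
    have "v = i" using z[of u v] x uv by (cases "v < i") (auto simp: tt_edges_def)
    then show ?thesis using that x uv by (auto simp: tt_edges_def)
  qed
  have upper: "path_weight w xs \<le> 1 + mpw w i n" if xs: "xs \<in> paths 1 n" for xs
  proof -
    define ys where "ys = takeWhile (\<lambda>v. v < i) xs"
    define zs where "zs = dropWhile (\<lambda>v. v < i) xs"
    have split: "xs = ys @ zs" by (simp add: ys_def zs_def)
    have xs1: "xs \<noteq> []" "hd xs = 1" "last xs = n" "sorted_wrt (<) xs" "set xs \<subseteq> {1..n}"
      using xs by (auto simp: paths_def)
    have ys_ne: "ys \<noteq> []" using xs1 i unfolding ys_def by (cases xs) auto
    have zs_ne: "zs \<noteq> []"
    proof
      assume "zs = []"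
      then have "\<forall>v\<in>set xs. v < i" unfolding zs_def by (simp add: dropWhile_eq_Nil_conv)
      then show False using xs1 i last_in_set[of xs] by auto
    qed
    then obtain z zs' where zz: "zs = z # zs'" by (cases zs) auto
    have zi: "z \<ge> i" using hd_dropWhile[of "\<lambda>v. v < i" xs] zs_ne zz unfolding zs_def by auto
    have ys_lt: "\<forall>v\<in>set ys. v < i" unfolding ys_def by (meson set_takeWhileD)
    have sa: "sorted_wrt (<) (ys @ zs)" using xs1(4) split by simp
    have sorted_zs: "sorted_wrt (<) zs" using sa by (simp add: sorted_wrt_append)
    have set_xs: "set zs \<subseteq> set xs" "set ys \<subseteq> set xs" using split by auto
    have "path_weight w ys = 0"
    proof (rule pw_zero)
      fix e assume e: "e \<in> set (zip ys (tl ys))"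
      obtain u v where uv: "e = (u,v)" by fastforce
      have "sorted_wrt (<) ys" using sa by (simp add: sorted_wrt_append)
      then have "u < v" "u \<in> set ys" "v \<in> set ys" using edges_sorted e uv by blast+
      then show "\<not> w e" using z[of u v] ys_lt set_xs xs1(5) uv by auto
    qed
    have pwsplit: "path_weight w xs = path_weight w ys + (if w (last ys, hd zs) then 1 else 0) + path_weight w zs"
      using pw_append[OF ys_ne zs_ne] split by simp
    define zs0 where "zs0 = (if z = i then zs else i # zs)"
    have zs0_path: "zs0 \<in> paths i n"
    proof -
      have "last zs = n" using xs1(3) split zs_ne by simp
      moreover have "\<forall>v\<in>set zs. z \<le> v" using sorted_zs zz by auto
      moreover have "\<forall>v\<in>set zs. v \<le> n" using set_xs xs1(5) by auto
      moreover have "sorted_wrt (<) (i # zs)" if "z \<noteq> i"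
        using sorted_zs zz zi that by auto
      ultimately show ?thesis using zi sorted_zs zz unfolding zs0_def paths_def
        by (auto simp: subset_iff)
    qed
    have "path_weight w zs \<le> path_weight w zs0"
      using zz by (auto simp: zs0_def)
    also have "\<dots> \<le> mpw w i n" using zs0_path by (rule mpw_ge)
    finally show ?thesis using pwsplit \<open>path_weight w ys = 0\<close> by auto
  qed
  have lower: "1 + mpw w i n \<le> max_path_weight w n"
  proof -
    obtain zs where zs: "zs \<in> paths i n" "path_weight w zs = mpw w i n"
      using mpw_obtain[of i n w] i by auto
    define ys where "ys = (if k = 1 then [1] else [1, k])"
    have ys_ne: "ys \<noteq> []" and lys: "last ys = k" by (auto simp: ys_def)
    have zs_ne: "zs \<noteq> []" "hd zs = i" using zs by (auto simp: paths_def)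
    have "ys @ zs \<in> paths 1 n"
    proof -
      have "\<forall>v\<in>set zs. i \<le> v \<and> v \<le> n" using zs(1) by (auto simp: paths_def)
      then show ?thesis using zs(1) k i unfolding ys_def paths_def
        by (auto simp: sorted_wrt_append)
    qed
    then have "path_weight w (ys @ zs) \<le> max_path_weight w n"
      using mpw_ge unfolding max_path_weight_def mpw_def tt_paths_eq by blast
    moreover have "path_weight w (ys @ zs) = path_weight w ys + 1 + path_weight w zs"
      using pw_append[OF ys_ne zs_ne(1)] lys zs_ne(2) k by simp
    ultimately show ?thesis using zs(2) by simp
  qed
  have "max_path_weight w n \<le> 1 + mpw w i n"
    unfolding max_path_weight_def tt_paths_eq
    using mpw_upper[of 1 n w, OF upper] i unfolding mpw_def by auto
  then show ?thesis using lower by simp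
qed

lemma no_T:
  assumes "zeroE w n" "1 \<le> n"
  shows "max_path_weight w n = 0"
proof -
  have "mpw w 1 n \<le> 0"
  proof (rule mpw_upper)
    fix xs assume xs: "xs \<in> paths 1 n"
    have "path_weight w xs = 0"
    proof (rule pw_zero)
      fix e assume e: "e \<in> set (zip xs (tl xs))"
      obtain u v where uv: "e = (u,v)" by fastforce
      then have "u < v \<and> 1 \<le> u \<and> v \<le> n" using path_edges[OF xs] e by blast
      then show "\<not> w e" using assms(1) uv by (auto simp: zeroE_def tt_edges_def)
    qed
    then show "path_weight w xs \<le> 0" by simp
  qed (use assms in auto)
  then show ?thesis unfolding max_path_weight_def mpw_def tt_paths_eq by simp
qed

lemma decomp:
  assumes "1 \<le> n"
  shows "real (max_path_weight w n) =
           (\<Sum>i=2..n. (if Tev w i then 1 else 0) * (1 + real (mpw w i n)))"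
proof (cases "zeroE w n")
  case True
  have nT: "\<not> Tev w i" if "i \<in> {2..n}" for i
  proof
    assume "Tev w i"
    then obtain x where "x \<in> tt_edges i" "w x" unfolding Tev_def zeroE_def by blast
    moreover have "tt_edges i \<subseteq> tt_edges n" using that by (intro tt_edges_mono) auto
    ultimately show False using True unfolding zeroE_def by blast
  qed
  have "(\<Sum>i=2..n. (if Tev w i then 1 else 0) * (1 + real (mpw w i n))) = 0"
    by (rule sum.neutral) (use nT in auto)
  then show ?thesis using no_T[OF True assms] by simp
next
  case False
  then obtain i where i: "i \<in> {2..n}" "Tev w i" using Tev_exists by blast
  define F where "F = (\<lambda>j. (if Tev w j then 1 else 0) * (1 + real (mpw w j n)))"
  have "sum F ({2..n}-{i}) = 0"
  proof (rule sum.neutral, rule ballI)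
    fix j assume "j \<in> {2..n}-{i}"
    then have "\<not> Tev w j" using Tev_unique[of w i j] i(2) by blast
    then show "F j = 0" by (simp add: F_def)
  qed
  moreover have "sum F {2..n} = F i + sum F ({2..n}-{i})"
    by (rule sum.remove) (simp, rule i(1))
  ultimately have "sum F {2..n} = 1 + real (mpw w i n)" using i(2) by (simp add: F_def)
  then show ?thesis using T_value[OF i(2)] i(1) unfolding F_def by simp
qed



lemma finite_set_Pi_bool:
  assumes "finite A"
  shows "finite (set_pmf (Pi_pmf A d (P :: 'a \<Rightarrow> bool pmf)))"
  by (rule finite_subset[OF set_Pi_pmf_subset'[OF assms]]) (intro finite_PiE_dflt assms, simp)

lemma exp_local:
  fixes h :: "('a \<Rightarrow> bool) \<Rightarrow> real"
  assumes "finite A" "A' \<subseteq> A" "\<And>w w'. (\<forall>x\<in>A'. w x = w' x) \<Longrightarrow> h w = h w'"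
  shows "measure_pmf.expectation (Pi_pmf A d P) h = measure_pmf.expectation (Pi_pmf A' d P) h"
proof -
  have "Pi_pmf A' d P = map_pmf (\<lambda>f x. if x \<in> A' then f x else d) (Pi_pmf A d P)"
    using assms by (intro Pi_pmf_subset)
  then have "measure_pmf.expectation (Pi_pmf A' d P) h =
      measure_pmf.expectation (Pi_pmf A d P) (\<lambda>f. h (\<lambda>x. if x \<in> A' then f x else d))"
    by simp
  also have "\<dots> = measure_pmf.expectation (Pi_pmf A d P) h"
    by (intro Bochner_Integration.integral_cong refl assms(3)) auto
  finally show ?thesis ..
qed

lemma exp_pair:
  fixes G :: "'a \<Rightarrow> real" and H :: "'b \<Rightarrow> real"
  assumes "finite (set_pmf M)" "finite (set_pmf N)"
  shows "measure_pmf.expectation (pair_pmf M N) (\<lambda>(a,b). G a * H b) =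
         measure_pmf.expectation M G * measure_pmf.expectation N H"
proof -
  have "measure_pmf.expectation (pair_pmf M N) (\<lambda>(a,b). G a * H b) =
        (\<Sum>z\<in>set_pmf M \<times> set_pmf N. (\<lambda>(a,b). G a * H b) z * pmf (pair_pmf M N) z)"
    using assms by (intro integral_measure_pmf_real) (auto simp: set_pair_pmf)
  also have "\<dots> = (\<Sum>(a,b)\<in>set_pmf M \<times> set_pmf N. (G a * pmf M a) * (H b * pmf N b))"
    by (intro sum.cong) (auto simp: pmf_pair)
  also have "\<dots> = (\<Sum>a\<in>set_pmf M. \<Sum>b\<in>set_pmf N. (G a * pmf M a) * (H b * pmf N b))"
    by (rule sum.cartesian_product[symmetric])
  also have "\<dots> = (\<Sum>a\<in>set_pmf M. G a * pmf M a) * (\<Sum>b\<in>set_pmf N. H b * pmf N b)"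
    by (simp add: sum_product)
  also have "\<dots> = measure_pmf.expectation M G * measure_pmf.expectation N H"
    using assms by (simp add: integral_measure_pmf_real)
  finally show ?thesis .
qed

lemma exp_split:
  fixes g h :: "('a \<Rightarrow> bool) \<Rightarrow> real"
  assumes "finite A" "finite B" "A \<inter> B = {}"
    "\<And>w w'. (\<forall>x\<in>A. w x = w' x) \<Longrightarrow> g w = g w'"
    "\<And>w w'. (\<forall>x\<in>B. w x = w' x) \<Longrightarrow> h w = h w'"
  shows "measure_pmf.expectation (Pi_pmf (A \<union> B) d P) (\<lambda>w. g w * h w) =
         measure_pmf.expectation (Pi_pmf A d P) g * measure_pmf.expectation (Pi_pmf B d P) h"
proof -
  have "measure_pmf.expectation (Pi_pmf (A \<union> B) d P) (\<lambda>w. g w * h w) =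
        measure_pmf.expectation (pair_pmf (Pi_pmf A d P) (Pi_pmf B d P))
          (\<lambda>z. g ((\<lambda>(f,g) x. if x \<in> A then f x else g x) z) * h ((\<lambda>(f,g) x. if x \<in> A then f x else g x) z))"
    by (subst Pi_pmf_union[OF assms(1-3)]) simp
  also have "\<dots> = measure_pmf.expectation (pair_pmf (Pi_pmf A d P) (Pi_pmf B d P)) (\<lambda>(a,b). g a * h b)"
  proof (intro Bochner_Integration.integral_cong refl)
    fix z :: "('a \<Rightarrow> bool) \<times> ('a \<Rightarrow> bool)"
    obtain a b where z: "z = (a,b)" by fastforce
    have "g (\<lambda>x. if x \<in> A then a x else b x) = g a" by (rule assms(4)) auto
    moreover have "h (\<lambda>x. if x \<in> A then a x else b x) = h b" by (rule assms(5)) (use assms(3) in auto)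
    ultimately show "g ((\<lambda>(f,g) x. if x \<in> A then f x else g x) z) * h ((\<lambda>(f,g) x. if x \<in> A then f x else g x) z) = (\<lambda>(a,b). g a * h b) z"
      using z by simp
  qed
  also have "\<dots> = measure_pmf.expectation (Pi_pmf A d P) g * measure_pmf.expectation (Pi_pmf B d P) h"
    using assms by (intro exp_pair finite_set_Pi_bool)
  finally show ?thesis .
qed

lemma exp_zero:
  assumes "finite A" "S \<subseteq> A" "0 \<le> p" "p \<le> 1"
  shows "measure_pmf.expectation (Pi_pmf A False (\<lambda>_. bernoulli_pmf p))
           (\<lambda>w. if (\<forall>x\<in>S. \<not> w x) then 1 else 0) = (1 - p) ^ card S"
proof -
  define f where "f = (\<lambda>x (v::bool). if x \<in> S \<and> v then 0 else (1::real))"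
  have fx: "(\<lambda>w. if (\<forall>x\<in>S. \<not> w x) then 1 else 0) = (\<lambda>w. \<Prod>x\<in>A. f x (w x))"
  proof
    fix w :: "'a \<Rightarrow> bool"
    show "(if (\<forall>x\<in>S. \<not> w x) then 1 else 0) = (\<Prod>x\<in>A. f x (w x))"
      using assms(1,2) by (auto simp: f_def prod_zero_iff intro!: prod.neutral)
  qed
  then have "measure_pmf.expectation (Pi_pmf A False (\<lambda>_. bernoulli_pmf p))
           (\<lambda>w. if (\<forall>x\<in>S. \<not> w x) then 1 else 0) =
           (\<Prod>x\<in>A. measure_pmf.expectation (bernoulli_pmf p) (\<lambda>v. f x v))"
    using assms by (subst fx, intro expectation_prod_Pi_pmf) (auto simp: integrable_measure_pmf_finite f_def)
  also have "\<dots> = (\<Prod>x\<in>A. if x \<in> S then 1 - p else 1)"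
    using assms by (intro prod.cong refl) (simp add: f_def)
  also have "\<dots> = (1 - p) ^ card S"
    using assms by (simp add: prod.If_cases Int_absorb1)
  finally show ?thesis .
qed

lemma card_tt_edges: "card (tt_edges k) = k choose 2"
proof (induction k)
  case 0
  have "tt_edges 0 = {}" by (auto simp: tt_edges_def)
  then show ?case by simp
next
  case (Suc k)
  have "tt_edges (Suc k) = tt_edges k \<union> (\<lambda>a. (a, Suc k)) ` {1..k}"
    by (auto simp: tt_edges_def)
  moreover have "tt_edges k \<inter> (\<lambda>a. (a, Suc k)) ` {1..k} = {}"
    by (auto simp: tt_edges_def)
  ultimately have "card (tt_edges (Suc k)) = card (tt_edges k) + card ((\<lambda>a. (a, Suc k)) ` {1..k})"
    using finite_tt_edges by (simp add: card_Un_disjoint)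
  also have "card ((\<lambda>a. (a, Suc k)) ` {1..k}) = k"
    by (subst card_image) (auto simp: inj_on_def)
  finally show ?case using Suc by (simp add: numeral_2_eq_2)
qed



definition Redges :: "nat \<Rightarrow> nat \<Rightarrow> (nat \<times> nat) set" where
  "Redges i n = {(a, b). i \<le> a \<and> a < b \<and> b \<le> n}"

lemma finite_Redges: "finite (Redges i n)"
  by (rule finite_subset[of _ "{0..n} \<times> {0..n}"]) (auto simp: Redges_def)

lemma mpw_local:
  assumes "\<forall>x\<in>Redges i n. w x = w' x"
  shows "mpw w i n = mpw w' i n"
proof -
  have "path_weight w xs = path_weight w' xs" if "xs \<in> paths i n" for xs
  proof (rule pw_cong)
    fix e assume e: "e \<in> set (zip xs (tl xs))"
    obtain u v where uv: "e = (u,v)" by fastforce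
    then have "u < v \<and> i \<le> u \<and> v \<le> n" using path_edges[OF that] e by blast
    then show "w e = w' e" using assms uv by (auto simp: Redges_def)
  qed
  then show ?thesis unfolding mpw_def by (metis (no_types, lifting) image_cong)
qed

lemma exp_shift:
  assumes "1 \<le> i" "i \<le> n"
  shows "measure_pmf.expectation (Pi_pmf (Redges i n) False (\<lambda>_. bernoulli_pmf p)) (\<lambda>w. real (mpw w i n))
         = f_exp p (n - i + 1)"
proof -
  define c where "c = i - 1"
  define m where "m = n - i + 1"
  define h where "h = (\<lambda>(a::nat, b::nat). (a - c, b - c))"
  define s where "s = (\<lambda>(a::nat, b::nat). (a + c, b + c))"
  have bij: "bij_betw h (Redges i n) (tt_edges m)"
  proof (rule bij_betw_byWitness[where f' = s])
    show "\<forall>a\<in>Redges i n. s (h a) = a" using assms by (auto simp: Redges_def s_def h_def c_def)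
    show "\<forall>a\<in>tt_edges m. h (s a) = a" by (auto simp: tt_edges_def s_def h_def)
    show "h ` Redges i n \<subseteq> tt_edges m" using assms by (auto simp: Redges_def tt_edges_def h_def c_def m_def)
    show "s ` tt_edges m \<subseteq> Redges i n" using assms by (auto simp: Redges_def tt_edges_def s_def c_def m_def)
  qed
  have out: "h x \<notin> tt_edges m" if "x \<notin> Redges i n" for x
    using that assms by (cases x) (auto simp: Redges_def tt_edges_def h_def c_def m_def)
  have "Pi_pmf (Redges i n) False (\<lambda>_. bernoulli_pmf p) =
        map_pmf (\<lambda>g. g \<circ> h) (Pi_pmf (tt_edges m) False (\<lambda>_. bernoulli_pmf p))"
    by (rule Pi_pmf_bij_betw[OF finite_Redges bij out])
  then have "measure_pmf.expectation (Pi_pmf (Redges i n) False (\<lambda>_. bernoulli_pmf p)) (\<lambda>w. real (mpw w i n))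
     = measure_pmf.expectation (Pi_pmf (tt_edges m) False (\<lambda>_. bernoulli_pmf p)) (\<lambda>g. real (mpw (g \<circ> h) i n))"
    by simp
  also have "\<dots> = measure_pmf.expectation (Pi_pmf (tt_edges m) False (\<lambda>_. bernoulli_pmf p)) (\<lambda>g. real (max_path_weight g m))"
  proof (intro Bochner_Integration.integral_cong refl)
    fix g :: "nat \<times> nat \<Rightarrow> bool"
    have "mpw (g \<circ> h) i n = mpw (g \<circ> h) (1 + c) (m + c)"
      using assms by (simp add: c_def m_def)
    also have "\<dots> = mpw (\<lambda>(u,v). (g \<circ> h) (u + c, v + c)) 1 m" by (rule mpw_shift)
    also have "(\<lambda>(u,v). (g \<circ> h) (u + c, v + c)) = g" by (auto simp: h_def)
    finally show "real (mpw (g \<circ> h) i n) = real (max_path_weight g m)"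
      by (simp add: max_path_weight_def mpw_def tt_paths_eq o_def)
  qed
  also have "\<dots> = f_exp p m" using assms by (simp add: f_exp_def weight_pmf_def m_def)
  finally show ?thesis by (simp add: m_def)
qed


lemma choose2_Suc: "Suc j choose 2 = (j choose 2) + j"
  by (simp add: numeral_2_eq_2)

lemma exp_term:
  assumes p: "0 < p" "p < 1" and i: "2 \<le> i" "i \<le> n"
  shows "measure_pmf.expectation (Pi_pmf (tt_edges n) False (\<lambda>_. bernoulli_pmf p))
           (\<lambda>w. (if Tev w i then 1 else 0) * (1 + real (mpw w i n)))
         = (1 - (1 - p) ^ (i - 1)) * (1 - p) ^ ((i - 1) choose 2) * (f_exp p (n - i + 1) + 1)"
proof -
  let ?P = "\<lambda>_::nat\<times>nat. bernoulli_pmf p"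
  define A where "A = tt_edges i"
  define B where "B = tt_edges n - tt_edges i"
  have AB: "tt_edges n = A \<union> B" using tt_edges_mono[of i n] i by (auto simp: A_def B_def)
  have RB: "Redges i n \<subseteq> B" using i by (auto simp: Redges_def B_def tt_edges_def)
  have sub: "tt_edges (i - 1) \<subseteq> tt_edges i" by (rule tt_edges_mono) simp
  have "measure_pmf.expectation (Pi_pmf (tt_edges n) False ?P)
           (\<lambda>w. (if Tev w i then 1 else 0) * (1 + real (mpw w i n))) =
        measure_pmf.expectation (Pi_pmf A False ?P) (\<lambda>w. if Tev w i then 1 else 0) *
        measure_pmf.expectation (Pi_pmf B False ?P) (\<lambda>w. 1 + real (mpw w i n))"
    unfolding AB
  proof (rule exp_split)
    show "finite A" "finite B" by (simp_all add: A_def B_def finite_tt_edges)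
    show "A \<inter> B = {}" by (auto simp: A_def B_def)
  next
    fix w w' :: "nat \<times> nat \<Rightarrow> bool" assume "\<forall>x\<in>A. w x = w' x"
    then show "(if Tev w i then 1 else 0) = (if Tev w' i then 1 else (0::real))"
      using sub unfolding Tev_def zeroE_def A_def by (metis subsetD)
  next
    fix w w' :: "nat \<times> nat \<Rightarrow> bool" assume "\<forall>x\<in>B. w x = w' x"
    then have "mpw w i n = mpw w' i n" using RB by (intro mpw_local) blast
    then show "1 + real (mpw w i n) = 1 + real (mpw w' i n)" by simp
  qed
  also have "measure_pmf.expectation (Pi_pmf B False ?P) (\<lambda>w. 1 + real (mpw w i n)) =
             measure_pmf.expectation (Pi_pmf (Redges i n) False ?P) (\<lambda>w. 1 + real (mpw w i n))"
  proof (rule exp_local)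
    show "finite B" by (simp add: B_def finite_tt_edges)
    show "Redges i n \<subseteq> B" by (rule RB)
    fix w w' :: "nat \<times> nat \<Rightarrow> bool" assume "\<forall>x\<in>Redges i n. w x = w' x"
    then show "1 + real (mpw w i n) = 1 + real (mpw w' i n)" using mpw_local by metis
  qed
  also have "\<dots> = 1 + measure_pmf.expectation (Pi_pmf (Redges i n) False ?P) (\<lambda>w. real (mpw w i n))"
    by (subst Bochner_Integration.integral_add)
       (auto intro!: integrable_measure_pmf_finite finite_set_Pi_bool finite_Redges)
  also have "\<dots> = 1 + f_exp p (n - i + 1)"
    using i by (subst exp_shift) auto
  also have "measure_pmf.expectation (Pi_pmf A False ?P) (\<lambda>w. if Tev w i then 1 else 0) =
     measure_pmf.expectation (Pi_pmf A False ?P) (\<lambda>w. (if (\<forall>x\<in>tt_edges (i-1). \<not> w x) then 1 else 0)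
                                                   - (if (\<forall>x\<in>tt_edges i. \<not> w x) then 1 else (0::real)))"
    by (intro Bochner_Integration.integral_cong refl) (use sub in \<open>auto simp: Tev_def zeroE_def\<close>)
  also have "\<dots> = (1 - p) ^ card (tt_edges (i-1)) - (1 - p) ^ card (tt_edges i)"
  proof -
    have e1: "measure_pmf.expectation (Pi_pmf A False ?P) (\<lambda>w. (if (\<forall>x\<in>tt_edges (i-1). \<not> w x) then 1 else 0))
        = (1 - p) ^ card (tt_edges (i-1))"
      by (rule exp_zero) (use p sub in \<open>auto simp: A_def finite_tt_edges\<close>)
    have e2: "measure_pmf.expectation (Pi_pmf A False ?P) (\<lambda>w. (if (\<forall>x\<in>tt_edges i. \<not> w x) then 1 else 0))
        = (1 - p) ^ card (tt_edges i)"
      by (rule exp_zero) (use p sub in \<open>auto simp: A_def finite_tt_edges\<close>)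
    have d: "measure_pmf.expectation (Pi_pmf A False ?P) (\<lambda>w. (if (\<forall>x\<in>tt_edges (i-1). \<not> w x) then 1 else 0)
                                                   - (if (\<forall>x\<in>tt_edges i. \<not> w x) then 1 else (0::real)))
      = measure_pmf.expectation (Pi_pmf A False ?P) (\<lambda>w. (if (\<forall>x\<in>tt_edges (i-1). \<not> w x) then 1 else 0))
      - measure_pmf.expectation (Pi_pmf A False ?P) (\<lambda>w. (if (\<forall>x\<in>tt_edges i. \<not> w x) then 1 else 0))"
      by (rule Bochner_Integration.integral_diff)
         (auto intro!: integrable_measure_pmf_finite finite_set_Pi_bool simp: A_def finite_tt_edges)
    show ?thesis unfolding d e1 e2 ..
  qed
  also have "\<dots> = (1 - (1 - p) ^ (i - 1)) * (1 - p) ^ ((i - 1) choose 2)"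
  proof -
    obtain j where j: "i = Suc j" using i by (cases i) auto
    show ?thesis unfolding card_tt_edges j by (simp add: choose2_Suc power_add algebra_simps)
  qed
  finally show ?thesis by (simp add: algebra_simps)
qed

theorem lemma9:
  fixes p :: real and n :: nat
  assumes "0 < p" and "p < 1" and "1 \<le> n"
  shows "f_exp p n = (\<Sum>i = 2..n. (1 - (1 - p) ^ (i - 1)) * (1 - p) ^ ((i - 1) choose 2)
                                  * (f_exp p (n - i + 1) + 1))"
proof -
  let ?M = "Pi_pmf (tt_edges n) False (\<lambda>_::nat\<times>nat. bernoulli_pmf p)"
  have "f_exp p n = measure_pmf.expectation ?M (\<lambda>w. real (max_path_weight w n))"
    using assms by (simp add: f_exp_def weight_pmf_def)
  also have "\<dots> = measure_pmf.expectation ?M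
      (\<lambda>w. \<Sum>i=2..n. (if Tev w i then 1 else 0) * (1 + real (mpw w i n)))"
    using decomp[OF assms(3)] by simp
  also have "\<dots> = (\<Sum>i=2..n. measure_pmf.expectation ?M
      (\<lambda>w. (if Tev w i then 1 else 0) * (1 + real (mpw w i n))))"
    by (rule Bochner_Integration.integral_sum)
       (auto intro!: integrable_measure_pmf_finite finite_set_Pi_bool finite_tt_edges)
  also have "\<dots> = (\<Sum>i = 2..n. (1 - (1 - p) ^ (i - 1)) * (1 - p) ^ ((i - 1) choose 2)
                                  * (f_exp p (n - i + 1) + 1))"
    by (intro sum.cong refl exp_term assms) auto
  finally show ?thesis .
qed


end
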